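(* For all $k\in\mathbb N$, all $n>k$ and all irrational $x\in(0,1)$, $$|\delta_k(T^{n-k}x)-\delta_n(x)|<-\log(1-2^{-k/2}).$$
   Context: $T:(0,1)\to[0,1)$ is the Gauss map $T(x)=\{1/x\}$ (fractional part of $1/x$). For irrational $x\in(0,1)$ with continued fraction expansion $[a_1,a_2,\ldots]$, $q_n(x)$ is the denominator (in lowest terms) of the $n$-th convergent $p_n/q_n=[a_1,\ldots,a_n]$, and $\delta_n(x)=\log q_n(x)+\sum_{j=0}^{n-1}\log(T^jx)$, with $\log$ the natural logarithm. *)

theory Defs
  imports Complex_Main
begin

definition gauss :: "real \<Rightarrow> real" where
  "gauss x = frac (1 / x)"

definition cf_digit :: "nat \<Rightarrow> real \<Rightarrow> nat" where
  "cf_digit j x = nat \<lfloor>1 / ((gauss ^^ (j - 1)) x)\<rfloor>"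

fun cf_eval :: "nat list \<Rightarrow> rat" where
  "cf_eval [] = 0"
| "cf_eval (a # as) = 1 / (of_nat a + cf_eval as)"

definition convergent :: "nat \<Rightarrow> real \<Rightarrow> rat" where
  "convergent n x = cf_eval (map (\<lambda>j. cf_digit j x) [1..<n+1])"

definition cf_q :: "nat \<Rightarrow> real \<Rightarrow> int" where
  "cf_q n x = snd (quotient_of (convergent n x))"

definition cf_delta :: "nat \<Rightarrow> real \<Rightarrow> real" where
  "cf_delta n x = ln (real_of_int (cf_q n x)) + (\<Sum>j<n. ln ((gauss ^^ j) x))"

end

theory Submission
  imports Defs
begin

fun mA :: "nat list \<Rightarrow> nat" and mB :: "nat list \<Rightarrow> nat"
  and mC :: "nat list \<Rightarrow> nat" and mD :: "nat list \<Rightarrow> nat" where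
  "mA [] = 0" | "mA (a # L) = mC L"
| "mB [] = 1" | "mB (a # L) = mD L"
| "mC [] = 1" | "mC (a # L) = a * mC L + mA L"
| "mD [] = 0" | "mD (a # L) = a * mD L + mB L"

lemma m_append:
  "mC (P @ M) = mC P * mC M + mD P * mA M \<and> mD (P @ M) = mC P * mD M + mD P * mB M \<and>
   mA (P @ M) = mA P * mC M + mB P * mA M \<and> mB (P @ M) = mA P * mD M + mB P * mB M"
  by (induction P) (auto simp: algebra_simps)

lemma m_det: "real (mA L) * real (mD L) - real (mB L) * real (mC L) = (-1) ^ Suc (length L)"
  by (induction L) (auto simp: algebra_simps)

lemma mC_pos: "\<forall>a\<in>set L. a \<ge> 1 \<Longrightarrow> mC L \<ge> 1"
proof (induction L)
  case (Cons a L) then show ?case by (simp add: trans_le_add1)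
qed simp

lemma mD_le: "\<forall>a\<in>set L. a \<ge> 1 \<Longrightarrow> mD L \<le> mC L \<and> (L \<noteq> [] \<longrightarrow> mB L \<le> mA L)"
proof (induction L)
  case (Cons a L)
  show ?case
  proof (cases "L = []")
    case True then show ?thesis using Cons by simp
  next
    case False then show ?thesis using Cons by (simp add: add_mono)
  qed
qed simp

lemma m_growth: "\<forall>a\<in>set L. a \<ge> 1 \<Longrightarrow> 2 ^ length L \<le> mC L * (mC L + mA L)"
proof (induction L)
  case (Cons a L)
  then have IH: "2 ^ length L \<le> mC L * (mC L + mA L)" and a: "a \<ge> 1" by auto
  have "a * mC L \<ge> mC L" using a by simp
  then have "mC (a#L) * (mC (a#L) + mA (a#L)) \<ge> (mC L + mA L) * (2 * mC L + mA L)"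
    by (simp add: mult_mono add_mono)
  moreover have "(mC L + mA L) * (2 * mC L + mA L) \<ge> 2 * (mC L * (mC L + mA L))"
    by (simp add: algebra_simps)
  ultimately have "mC (a#L) * (mC (a#L) + mA (a#L)) \<ge> 2 * (mC L * (mC L + mA L))"
    by linarith
  then show ?case using IH by simp
qed simp

lemma m_coprime: "coprime (mA L) (mC L)"
proof (induction L)
  case (Cons a L)
  then show ?case by (simp add: coprime_iff_gcd_eq_1 gcd_add_mult gcd.commute)
qed simp

lemma cf_eval_m: "\<forall>a\<in>set L. a \<ge> 1 \<Longrightarrow> cf_eval L = of_nat (mA L) / of_nat (mC L)"
proof (induction L)
  case (Cons a L)
  then have "mC L \<ge> 1" using mC_pos by simp
  have "cf_eval (a # L) = 1 / (of_nat a + of_nat (mA L) / of_nat (mC L))"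
    using Cons by simp
  also have "\<dots> = of_nat (mC L) / (of_nat a * of_nat (mC L) + of_nat (mA L))"
    using \<open>mC L \<ge> 1\<close> by (simp add: field_simps)
  finally show ?case by simp
qed simp

lemma quotient_cf_eval: "\<forall>a\<in>set L. a \<ge> 1 \<Longrightarrow> quotient_of (cf_eval L) = (int (mA L), int (mC L))"
proof -
  assume h: "\<forall>a\<in>set L. a \<ge> 1"
  have "cf_eval L = Fract (int (mA L)) (int (mC L))"
    using cf_eval_m[OF h] by (simp add: Fract_of_int_quotient)
  moreover have "coprime (int (mA L)) (int (mC L))" using m_coprime by simp
  moreover have "int (mC L) > 0" using mC_pos[OF h] by simp
  ultimately show ?thesis by (simp add: quotient_of_Fract)
qed

lemma prod_lemma:
  assumes "\<forall>a\<in>set L. a \<ge> 1"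
    and "\<forall>j<length L. z j > 0 \<and> z j = 1 / (real (L ! j) + z (Suc j))"
    and "z (length L) > 0"
  shows "z 0 = (real (mA L) + z (length L) * real (mB L)) / (real (mC L) + z (length L) * real (mD L))
    \<and> (\<Prod>j<length L. z j) = 1 / (real (mC L) + z (length L) * real (mD L))"
  using assms
proof (induction L arbitrary: z)
  case Nil then show ?case by simp
next
  case (Cons a L)
  define w where "w = z (Suc (length L))"
  have w: "w > 0" using Cons.prems(3) by (simp add: w_def)
  have h1: "\<forall>a\<in>set L. a \<ge> 1" using Cons.prems by simp
  have h2: "\<forall>j<length L. z (Suc j) > 0 \<and> z (Suc j) = 1 / (real (L ! j) + z (Suc (Suc j)))"
  proof (intro allI impI)
    fix j assume "j < length L"
    then have "Suc j < length (a # L)" by simp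
    then show "z (Suc j) > 0 \<and> z (Suc j) = 1 / (real (L ! j) + z (Suc (Suc j)))"
      using Cons.prems(2) by (metis nth_Cons_Suc)
  qed
  have h3: "z (Suc (length L)) > 0" using w by (simp add: w_def)
  have IH: "z 1 = (real (mA L) + w * real (mB L)) / (real (mC L) + w * real (mD L))
    \<and> (\<Prod>j<length L. z (Suc j)) = 1 / (real (mC L) + w * real (mD L))"
    using Cons.IH[of "\<lambda>j. z (Suc j)", OF h1 h2 h3] by (simp add: w_def)
  have a: "real a \<ge> 1" using Cons.prems by simp
  have C: "real (mC L) \<ge> 1" using mC_pos Cons.prems by simp
  have pos: "real (mC L) + w * real (mD L) > 0" using C w by (simp add: add_pos_nonneg)
  have z0: "z 0 = 1 / (real a + z 1)" using Cons.prems(2) by force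
  have z0': "z 0 = (real (mC L) + w * real (mD L)) /
      (real a * real (mC L) + real (mA L) + w * (real a * real (mD L) + real (mB L)))"
    unfolding z0 IH[THEN conjunct1] using pos by (simp add: field_simps)
  have pos2: "real a * real (mC L) + real (mA L) + w * (real a * real (mD L) + real (mB L)) > 0"
    using a C w by (simp add: add_pos_nonneg)
  have "(\<Prod>j<length (a # L). z j) = z 0 * (\<Prod>j<length L. z (Suc j))"
    by (simp only: length_Cons prod.lessThan_Suc_shift)
  also have "\<dots> = 1 / (real a * real (mC L) + real (mA L) + w * (real a * real (mD L) + real (mB L)))"
    unfolding z0' IH[THEN conjunct2] using pos pos2 by (simp add: field_simps)
  finally show ?case using z0' by (simp add: w_def algebra_simps)
qed

lemma gauss_step:
  assumes "x \<in> {0<..<1}" "x \<notin> \<rat>"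
  shows "gauss x \<in> {0<..<1} \<and> gauss x \<notin> \<rat> \<and> \<lfloor>1/x\<rfloor> \<ge> 1
    \<and> x = 1 / (of_int \<lfloor>1/x\<rfloor> + gauss x)"
proof -
  have x: "0 < x" "x < 1" using assms by auto
  have ir: "1/x \<notin> \<rat>"
  proof
    assume "1/x \<in> \<rat>" then have "inverse (1/x) \<in> \<rat>" by (rule Rats_inverse)
    then show False using assms x by simp
  qed
  have "1/x > 1" using x by simp
  then have fl: "\<lfloor>1/x\<rfloor> \<ge> 1" by (simp add: le_floor_iff)
  have g: "gauss x = 1/x - of_int \<lfloor>1/x\<rfloor>" by (simp add: gauss_def frac_def)
  have gq: "gauss x \<notin> \<rat>"
  proof
    assume "gauss x \<in> \<rat>"
    then have "gauss x + of_int \<lfloor>1/x\<rfloor> \<in> \<rat>" by simp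
    then show False using ir g by simp
  qed
  have "gauss x \<noteq> 0" using gq by auto
  moreover have "gauss x \<ge> 0" "gauss x < 1" by (simp_all add: gauss_def frac_lt_1)
  ultimately have "gauss x \<in> {0<..<1}" by simp
  moreover have "x = 1 / (of_int \<lfloor>1/x\<rfloor> + gauss x)" using g x by simp
  ultimately show ?thesis using gq fl by blast
qed

lemma gauss_iter:
  assumes "x \<in> {0<..<1}" "x \<notin> \<rat>"
  shows "(gauss ^^ j) x \<in> {0<..<1} \<and> (gauss ^^ j) x \<notin> \<rat>"
proof (induction j)
  case (Suc j) then show ?case using gauss_step[of "(gauss ^^ j) x"] by simp
qed (use assms in simp)

lemma digit_facts:
  assumes "x \<in> {0<..<1}" "x \<notin> \<rat>"
  shows "cf_digit (Suc j) x \<ge> 1 \<and>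
    (gauss ^^ j) x = 1 / (real (cf_digit (Suc j) x) + (gauss ^^ Suc j) x)"
proof -
  have h: "(gauss ^^ j) x \<in> {0<..<1}" "(gauss ^^ j) x \<notin> \<rat>" using gauss_iter[OF assms] by auto
  note st = gauss_step[OF h]
  have fl: "\<lfloor>1 / (gauss ^^ j) x\<rfloor> \<ge> 1" using st by blast
  have eq: "(gauss ^^ j) x = 1 / (of_int \<lfloor>1 / (gauss ^^ j) x\<rfloor> + gauss ((gauss ^^ j) x))"
    using st by blast
  have d0: "cf_digit (Suc j) x = nat \<lfloor>1 / (gauss ^^ j) x\<rfloor>" by (simp add: cf_digit_def)
  have d: "real (cf_digit (Suc j) x) = of_int \<lfloor>1 / (gauss ^^ j) x\<rfloor>"
    unfolding d0 using fl by (intro of_nat_nat) linarith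
  have "cf_digit (Suc j) x \<ge> 1" unfolding d0 using fl by (metis nat_mono nat_one_as_int)
  then show ?thesis using eq d by simp
qed

definition Lx :: "nat \<Rightarrow> real \<Rightarrow> nat list" where
  "Lx m x = map (\<lambda>j. cf_digit j x) [1..<m+1]"

lemma Lx_len: "length (Lx m x) = m" by (simp add: Lx_def)

lemma Lx_nth: "j < m \<Longrightarrow> Lx m x ! j = cf_digit (Suc j) x"
  unfolding Lx_def by (simp del: upt_Suc)

lemma Lx_ge1:
  assumes "x \<in> {0<..<1}" "x \<notin> \<rat>"
  shows "\<forall>a\<in>set (Lx m x). a \<ge> 1"
  by (metis Lx_len Lx_nth digit_facts[OF assms] in_set_conv_nth)

lemma delta_formula:
  assumes "x \<in> {0<..<1}" "x \<notin> \<rat>"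
  shows "cf_delta m x = - ln (1 + (gauss ^^ m) x * (real (mD (Lx m x)) / real (mC (Lx m x))))"
proof -
  define L where "L = Lx m x"
  define z where "z = (\<lambda>j. (gauss ^^ j) x)"
  have LF: "length L = m" "\<forall>a\<in>set L. a \<ge> 1" "\<And>j. j < m \<Longrightarrow> L ! j = cf_digit (Suc j) x"
    unfolding L_def using Lx_len Lx_ge1[OF assms] Lx_nth by auto
  have zpos: "\<And>j. z j > 0" using gauss_iter[OF assms] by (simp add: z_def)
  have "\<forall>j<length L. z j > 0 \<and> z j = 1 / (real (L ! j) + z (Suc j))"
    using LF digit_facts[OF assms] zpos by (simp add: z_def)
  from prod_lemma[OF LF(2) this] zpos
  have pr: "(\<Prod>j<m. z j) = 1 / (real (mC L) + z m * real (mD L))" using LF by simp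
  have C: "real (mC L) \<ge> 1" using mC_pos LF by simp
  have cq: "cf_q m x = int (mC L)"
    using quotient_cf_eval[OF LF(2)] by (simp add: cf_q_def convergent_def L_def Lx_def)
  have "(\<Sum>j<m. ln ((gauss ^^ j) x)) = ln (\<Prod>j<m. z j)"
  proof -
    have nz: "\<And>j. (gauss ^^ j) x \<noteq> 0" using zpos unfolding z_def by (metis less_irrefl)
    show ?thesis unfolding z_def by (subst ln_prod) (auto simp: nz)
  qed
  also have "\<dots> = - ln (real (mC L) + z m * real (mD L))"
    using pr C zpos by (simp add: ln_div)
  finally have "cf_delta m x = ln (real (mC L)) - ln (real (mC L) + z m * real (mD L))"
    by (simp add: cf_delta_def cq)
  also have "\<dots> = - ln ((real (mC L) + z m * real (mD L)) / real (mC L))"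
  proof -
    have p: "real (mC L) + z m * real (mD L) > 0" using C zpos[of m] by (simp add: add_pos_nonneg)
    show ?thesis using C p by (subst ln_div) auto
  qed
  also have "(real (mC L) + z m * real (mD L)) / real (mC L) = 1 + z m * (real (mD L) / real (mC L))"
    using C by (simp add: field_simps)
  finally show ?thesis by (simp add: L_def z_def)
qed

lemma rho_close:
  assumes P: "\<forall>a\<in>set P. a \<ge> 1" and M: "\<forall>a\<in>set M. a \<ge> 1"
  shows "\<bar>real (mD (P @ M)) / real (mC (P @ M)) - real (mD M) / real (mC M)\<bar> \<le> 1 / 2 ^ length M"
proof -
  define cp where "cp = real (mC P)"
  define dp where "dp = real (mD P)"
  define am where "am = real (mA M)"
  define bm where "bm = real (mB M)"
  define cm where "cm = real (mC M)"
  define dm where "dm = real (mD M)"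
  have cpm: "real (mC (P @ M)) = cp * cm + dp * am" and dpm: "real (mD (P @ M)) = cp * dm + dp * bm"
    using m_append[of P M] by (simp_all add: cp_def dp_def am_def bm_def cm_def dm_def)
  have det: "\<bar>cm * bm - dm * am\<bar> = 1"
    using m_det[of M] unfolding am_def bm_def cm_def dm_def
    by (cases "even (length M)") (auto simp: algebra_simps)
  have cp1: "cp \<ge> 1" using mC_pos[OF P] by (simp add: cp_def)
  have cm1: "cm \<ge> 1" using mC_pos[OF M] by (simp add: cm_def)
  have dp0: "dp \<ge> 0" "am \<ge> 0" by (simp_all add: dp_def am_def)
  have dpcp: "dp \<le> cp" using mD_le[OF P] by (simp add: dp_def cp_def)
  have gr: "2 ^ length M \<le> cm * (cm + am)"
  proof -
    have "real (2 ^ length M) \<le> real (mC M * (mC M + mA M))"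
      using m_growth[OF M] by (simp only: of_nat_le_iff)
    then show ?thesis by (simp add: cm_def am_def)
  qed
  have cpos: "cp * cm + dp * am > 0" using cp1 cm1 dp0
    by (simp add: add_pos_nonneg)
  have "(cp * dm + dp * bm) / (cp * cm + dp * am) - dm / cm
      = dp * (cm * bm - dm * am) / (cm * (cp * cm + dp * am))"
    using cpos cm1 by (simp add: field_simps)
  then have "\<bar>(cp * dm + dp * bm) / (cp * cm + dp * am) - dm / cm\<bar>
      = dp / (cm * (cp * cm + dp * am))"
    using cpos cm1 dp0 det by (simp add: abs_mult)
  also have "\<dots> \<le> 1 / (cm * (cm + am))"
  proof -
    have "dp * (cm * (cm + am)) \<le> cm * (cp * cm + dp * am)"
    proof -
      have "dp * cm \<le> cp * cm" using dpcp cm1 by (simp add: mult_right_mono)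
      then have "dp * cm * cm \<le> cp * cm * cm" using cm1 by (simp add: mult_right_mono)
      then show ?thesis by (simp add: algebra_simps)
    qed
    then show ?thesis using cpos cm1 dp0
      by (simp add: divide_simps add_pos_nonneg)
  qed
  also have "\<dots> \<le> 1 / 2 ^ length M"
    using gr by (simp add: frac_le)
  finally show ?thesis by (simp add: cpm dpm cm_def dm_def)
qed

lemma ln_close_aux:
  fixes a b :: real
  assumes "a \<ge> 0" "b \<ge> 0"
  shows "((1 + a) - (1 + b)) / (1 + b) \<le> \<bar>a - b\<bar>"
proof (cases "a \<le> b")
  case True
  then have "((1 + a) - (1 + b)) / (1 + b) \<le> 0" using assms by (intro divide_nonpos_pos) auto
  then show ?thesis by linarith
next
  case False
  then have "((1 + a) - (1 + b)) / (1 + b) \<le> ((1 + a) - (1 + b)) / 1"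
    using assms by (intro divide_left_mono) auto
  then show ?thesis using False by simp
qed

lemma ln_close:
  fixes a b :: real
  assumes "a \<ge> 0" "b \<ge> 0"
  shows "\<bar>ln (1 + a) - ln (1 + b)\<bar> \<le> \<bar>a - b\<bar>"
proof -
  have "ln (1 + a) - ln (1 + b) \<le> ((1 + a) - (1 + b)) / (1 + b)"
    using assms by (intro ln_diff_le) auto
  also have "\<dots> \<le> \<bar>a - b\<bar>" using ln_close_aux[OF assms] .
  finally have 1: "ln (1 + a) - ln (1 + b) \<le> \<bar>a - b\<bar>" .
  have "ln (1 + b) - ln (1 + a) \<le> ((1 + b) - (1 + a)) / (1 + a)"
    using assms by (intro ln_diff_le) auto
  also have "\<dots> \<le> \<bar>b - a\<bar>" using ln_close_aux[OF assms(2,1)] .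
  finally have 2: "ln (1 + b) - ln (1 + a) \<le> \<bar>a - b\<bar>" by simp
  show ?thesis using 1 2 by linarith
qed

lemma final_bound:
  assumes "k \<ge> 1"
  shows "1 / 2 ^ k < - ln (1 - 2 powr (- real k / 2))"
proof -
  define y where "y = 2 powr (- real k / 2)"
  have y0: "y > 0" by (simp add: y_def)
  have y1: "y < 1" using assms by (simp add: y_def powr_less_one)
  have "1 / 2 ^ k = 2 powr (- real k)" by (simp add: powr_minus powr_realpow divide_inverse)
  also have "\<dots> \<le> y" unfolding y_def by (intro powr_mono) auto
  finally have a: "1 / 2 ^ k \<le> y" .
  have "ln (1 - y) - ln 1 < ((1 - y) - 1) / 1"
    using y0 y1 by (intro ln_diff_less) auto
  then have "y < - ln (1 - y)" by simp
  then show ?thesis using a by (simp add: y_def)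
qed

lemma cf_digit_shift: "cf_digit (Suc i) ((gauss ^^ m) x) = cf_digit (Suc (i + m)) x"
  by (simp add: cf_digit_def funpow_add)

theorem lemma3p5:
  fixes k n :: nat and x :: real
  assumes "k \<ge> 1" and "n > k"
    and "x \<in> {0<..<1}" and "x \<notin> \<rat>"
  shows "\<bar>cf_delta k ((gauss ^^ (n - k)) x) - cf_delta n x\<bar> < - ln (1 - 2 powr (- real k / 2))"
proof -
  define y where "y = (gauss ^^ (n - k)) x"
  have yi: "y \<in> {0<..<1}" "y \<notin> \<rat>" using gauss_iter[OF assms(3,4)] by (auto simp: y_def)
  have gy: "(gauss ^^ k) y = (gauss ^^ n) x"
  proof -
    have "(gauss ^^ k) ((gauss ^^ (n - k)) x) = (gauss ^^ (k + (n - k))) x"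
      by (simp add: funpow_add)
    then show ?thesis using assms(2) by (simp add: y_def)
  qed
  define t where "t = (gauss ^^ n) x"
  have t: "t > 0" "t < 1" using gauss_iter[OF assms(3,4)] by (auto simp: t_def)
  define P where "P = Lx (n - k) x"
  define M where "M = Lx k y"
  have split: "Lx n x = P @ M"
  proof (rule nth_equalityI)
    show "length (Lx n x) = length (P @ M)" using assms(2) by (simp add: P_def M_def Lx_len)
    fix j assume "j < length (Lx n x)"
    then have j: "j < n" by (simp add: Lx_len)
    show "Lx n x ! j = (P @ M) ! j"
    proof (cases "j < n - k")
      case True then show ?thesis using j by (simp add: nth_append P_def Lx_len Lx_nth)
    next
      case False
      then have "j - (n - k) < k" using j by simp
      then have "M ! (j - (n - k)) = cf_digit (Suc j) x"
        using False by (simp add: M_def Lx_nth y_def cf_digit_shift)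
      then show ?thesis using False j by (simp add: nth_append P_def Lx_len Lx_nth)
    qed
  qed
  have Pg: "\<forall>a\<in>set P. a \<ge> 1" using Lx_ge1[OF assms(3,4)] by (simp add: P_def)
  have Mg: "\<forall>a\<in>set M. a \<ge> 1" using Lx_ge1[OF yi] by (simp add: M_def)
  have dy: "cf_delta k y = - ln (1 + t * (real (mD M) / real (mC M)))"
    using delta_formula[OF yi, of k] gy by (simp add: M_def t_def)
  have dx: "cf_delta n x = - ln (1 + t * (real (mD (P @ M)) / real (mC (P @ M))))"
    using delta_formula[OF assms(3,4), of n] split by (simp add: t_def)
  have "\<bar>cf_delta k y - cf_delta n x\<bar>
      = \<bar>ln (1 + t * (real (mD (P @ M)) / real (mC (P @ M)))) - ln (1 + t * (real (mD M) / real (mC M)))\<bar>"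
    unfolding dy dx by simp
  also have "\<dots> \<le> \<bar>t * (real (mD (P @ M)) / real (mC (P @ M))) - t * (real (mD M) / real (mC M))\<bar>"
    using t by (intro ln_close) auto
  also have "\<dots> = t * \<bar>real (mD (P @ M)) / real (mC (P @ M)) - real (mD M) / real (mC M)\<bar>"
    using t by (metis abs_mult abs_of_pos right_diff_distrib)
  also have "\<dots> \<le> 1 * (1 / 2 ^ length M)"
    using t rho_close[OF Pg Mg] by (intro mult_mono) auto
  also have "\<dots> < - ln (1 - 2 powr (- real k / 2))"
    using final_bound[OF assms(1)] by (simp add: M_def Lx_len)
  finally show ?thesis by (simp add: y_def)
qed

end
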